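(* Let $R_0(z)=\sum_{n\ge 0} r_n z^n$, where $r_n$ is the number of $R$-colorings of size $n$ of lambda skeletons of degree $0$. Then, as formal power series, $$R_0(z) = -\frac{1}{54z}\left(1-18z-(1-12z)^{3/2}\right).$$
   Context: Lambda skeletons: graded sets $\mathrm{SLam}(i)$, $i\in\mathbb{N}$, least such that $\_ \in \mathrm{SLam}(1)$; $p\in\mathrm{SLam}(j), q\in\mathrm{SLam}(k)\Rightarrow p(q)\in\mathrm{SLam}(j+k)$; $p\in\mathrm{SLam}(i+1)\Rightarrow \lambda\_.p\in\mathrm{SLam}(i)$; the index $i$ is the degree. Define graded sets $\mathrm{SNeu}(i)$ and $\mathrm{SNF}(i)$ of skeletons by the rules (v) $\_\in\mathrm{SNeu}(1)$; (a) $p\in\mathrm{SNeu}(j)$, $q\in\mathrm{SNF}(k)$ $\Rightarrow$ $p(q)\in\mathrm{SNeu}(j+k)$; (s) $p\in\mathrm{SNeu}(i)\Rightarrow p\in\mathrm{SNF}(i)$; ($\ell$) $p\in\mathrm{SNF}(i+1)\Rightarrow \lambda\_.p\in\mathrm{SNF}(i)$. An $R$-coloring of a skeleton $p\in\mathrm{SLam}(i)$ is a derivation of $p\in\mathrm{SNF}(i)$ using these rules; its size is the number of uses of rule (s) in it. Here $(1-12z)^{3/2}$ denotes the binomial power series $\sum_{m\ge0}\binom{3/2}{m}(-12z)^m$. *)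

theory Defs
  imports "HOL-Computational_Algebra.Formal_Power_Series"
begin

text \<open>Lambda skeletons: \<open>Hole\<close> is the placeholder \<open>_\<close>, \<open>App p q\<close> is \<open>p(q)\<close>,
  \<open>Lam p\<close> is \<open>\<lambda>_.p\<close>.\<close>
datatype skel = Hole | App skel skel | Lam skel

inductive slam :: "skel \<Rightarrow> nat \<Rightarrow> bool" where
  slam_hole: "slam Hole 1"
| slam_app: "slam p j \<Longrightarrow> slam q k \<Longrightarrow> slam (App p q) (j + k)"
| slam_lam: "slam p (Suc i) \<Longrightarrow> slam (Lam p) i"

datatype deriv = RV | RA deriv deriv | RS deriv | RL deriv

inductive der_neu :: "deriv \<Rightarrow> skel \<Rightarrow> nat \<Rightarrow> bool"
  and der_nf :: "deriv \<Rightarrow> skel \<Rightarrow> nat \<Rightarrow> bool" where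
  rule_v: "der_neu RV Hole 1"
| rule_a: "der_neu d1 p j \<Longrightarrow> der_nf d2 q k \<Longrightarrow> der_neu (RA d1 d2) (App p q) (j + k)"
| rule_s: "der_neu d p i \<Longrightarrow> der_nf (RS d) p i"
| rule_l: "der_nf d p (Suc i) \<Longrightarrow> der_nf (RL d) (Lam p) i"

fun dsize :: "deriv \<Rightarrow> nat" where
  "dsize RV = 0"
| "dsize (RA d1 d2) = dsize d1 + dsize d2"
| "dsize (RS d) = Suc (dsize d)"
| "dsize (RL d) = dsize d"

text \<open>Number of R-colorings of size n of lambda skeletons of degree 0:
  pairs (skeleton p \<in> SLam(0), derivation of p \<in> SNF(0)) of size n.\<close>
definition r_count :: "nat \<Rightarrow> nat" where
  "r_count n = card {(p, d). slam p 0 \<and> der_nf d p 0 \<and> dsize d = n}"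

definition binom_3_2 :: "real fps" where
  "binom_3_2 = Abs_fps (\<lambda>m. ((3/2::real) gchoose m) * (-12) ^ m)"

end

theory Submission
  imports Defs "HOL-Computational_Algebra.Polynomial"
begin
unbundle fps_syntax


definition agree :: "nat \<Rightarrow> real fps \<Rightarrow> real fps \<Rightarrow> bool" where
  "agree m A B \<longleftrightarrow> (\<forall>j<m. A $ j = B $ j)"

lemma fixpoint_exists:
  fixes \<Phi> :: "real fps \<Rightarrow> real fps"
  assumes contr: "\<And>m A B. agree m A B \<Longrightarrow> agree (Suc m) (\<Phi> A) (\<Phi> B)"
  shows "\<exists>U. \<Phi> U = U"
proof -
  define s where "s k = (\<Phi> ^^ k) 0" for k
  have sS: "s (Suc k) = \<Phi> (s k)" for k by (simp add: s_def)
  have c1: "agree k (s k) (s (Suc k))" for k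
  proof (induction k)
    case 0 then show ?case by (simp add: agree_def)
  next
    case (Suc k) then show ?case using contr[OF Suc] by (simp add: sS)
  qed
  have c2: "agree k (s k) (s k')" if "k \<le> k'" for k k'
    using that
  proof (induction k' rule: dec_induct)
    case base then show ?case by (simp add: agree_def)
  next
    case (step k')
    then show ?case using c1[of k'] by (auto simp: agree_def)
  qed
  define U where "U = Abs_fps (\<lambda>j. s (Suc j) $ j)"
  have aU: "agree m U (s m)" for m
    using c2 by (auto simp: agree_def U_def)
  have "\<Phi> U $ j = U $ j" for j
  proof -
    have "agree (Suc j) (\<Phi> U) (\<Phi> (s j))" by (rule contr[OF aU])
    then have "\<Phi> U $ j = s (Suc j) $ j" by (simp add: agree_def sS)
    then show ?thesis by (simp add: U_def)
  qed
  then show ?thesis by (intro exI[of _ U]) (simp add: fps_eq_iff)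
qed

lemma agree_mult: "agree m A B \<Longrightarrow> agree m C D \<Longrightarrow> agree m (A * C) (B * D)"
  unfolding agree_def fps_mult_nth by (auto intro!: sum.cong)
lemma agree_add: "agree m A B \<Longrightarrow> agree m C D \<Longrightarrow> agree m (A + C) (B + D)"
  unfolding agree_def by auto
lemma agree_diff: "agree m A B \<Longrightarrow> agree m C D \<Longrightarrow> agree m (A - C) (B - D)"
  unfolding agree_def by auto
lemma agree_refl: "agree m A A" unfolding agree_def by auto
lemma agree_X: "agree m A B \<Longrightarrow> agree (Suc m) (fps_X * A) (fps_X * B)"
  unfolding agree_def by (auto simp: less_Suc_eq_0_disj)

definition ev :: "real poly \<Rightarrow> real fps \<Rightarrow> real fps" where
  "ev p V = poly (map_poly fps_const p) V"

lemma fps_const_sum: "fps_const (sum f A) = (\<Sum>i\<in>A. fps_const (f i))"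
  by (induction A rule: infinite_finite_induct) (auto simp flip: fps_const_add)

lemma map_poly_fc_mult: "map_poly fps_const (p * q) = map_poly fps_const p * map_poly (fps_const :: real \<Rightarrow> real fps) q"
  by (intro poly_eqI) (simp add: coeff_map_poly coeff_mult fps_const_sum)
lemma map_poly_fc_add: "map_poly fps_const (p + q) = map_poly fps_const p + map_poly (fps_const :: real \<Rightarrow> real fps) q"
  by (intro poly_eqI) (simp add: coeff_map_poly)
lemma map_poly_fc_diff: "map_poly fps_const (p - q) = map_poly fps_const p - map_poly (fps_const :: real \<Rightarrow> real fps) q"
  by (intro poly_eqI) (simp add: coeff_map_poly)

lemma ev_mult: "ev (p * q) V = ev p V * ev q V"
  by (simp add: ev_def map_poly_fc_mult)
lemma ev_add: "ev (p + q) V = ev p V + ev q V"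
  by (simp add: ev_def map_poly_fc_add)
lemma ev_diff: "ev (p - q) V = ev p V - ev q V"
  by (simp add: ev_def map_poly_fc_diff)
lemma ev_const: "ev [:c:] V = fps_const c"
  by (simp add: ev_def map_poly_pCons)
lemma ev_0: "ev 0 V = 0" by (simp add: ev_def)
lemma ev_1: "ev 1 V = 1" by (simp add: ev_def)
lemma ev_u: "ev [:0,1:] V = V" by (simp add: ev_def map_poly_pCons)
lemma ev_sum: "ev (sum f A) V = (\<Sum>i\<in>A. ev (f i) V)"
  by (induction A rule: infinite_finite_induct) (auto simp: ev_add ev_0)

lemma agree_ev: "agree m A B \<Longrightarrow> agree m (ev p A) (ev p B)"
proof (induction p rule: pCons_induct)
  case 0 then show ?case by (simp add: ev_0 agree_refl)
next
  case (pCons a p)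
  have "ev (pCons a p) V = fps_const a + V * ev p V" for V
    by (simp add: ev_def map_poly_pCons)
  then show ?case using pCons by (simp add: agree_add agree_mult agree_refl)
qed


definition subst :: "real poly fps \<Rightarrow> real fps \<Rightarrow> real fps" where
  "subst H V = Abs_fps (\<lambda>m. \<Sum>n\<le>m. (fps_X ^ n * ev (H $ n) V) $ m)"

definition TT :: "nat \<Rightarrow> real poly fps \<Rightarrow> real fps \<Rightarrow> real fps" where
  "TT M H V = (\<Sum>n\<le>M. fps_X ^ n * ev (H $ n) V)"

lemma subst_TT: assumes "m \<le> M" shows "subst H V $ m = TT M H V $ m"
proof -
  have "TT M H V $ m = (\<Sum>n\<le>M. (fps_X ^ n * ev (H $ n) V) $ m)"
    by (simp add: TT_def fps_sum_nth)
  also have "\<dots> = (\<Sum>n\<le>m. (fps_X ^ n * ev (H $ n) V) $ m)"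
    using assms by (intro sum.mono_neutral_right) (auto simp: fps_X_power_mult_nth)
  finally show ?thesis by (simp add: subst_def)
qed

lemma agree_subst_TT: "agree (Suc m) (subst H V) (TT m H V)"
  unfolding agree_def using subst_TT by auto

lemma subst_add: "subst (H1 + H2) V = subst H1 V + subst H2 V"
  by (simp add: subst_def fps_eq_iff ev_add distrib_left sum.distrib)

lemma subst_diff: "subst (H1 - H2) V = subst H1 V - subst H2 V"
  by (simp add: subst_def fps_eq_iff ev_diff right_diff_distrib sum_subtractf)

lemma subst_const: "subst (fps_const p) V = ev p V"
proof -
  have "subst (fps_const p) V $ m = ev p V $ m" for m
  proof -
    have "(\<Sum>n\<le>m. (fps_X ^ n * ev (fps_const p $ n) V) $ m) = (\<Sum>n\<in>{0}. (fps_X ^ n * ev (fps_const p $ n) V) $ m)"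
      by (intro sum.mono_neutral_right) (auto simp: ev_0)
    then show ?thesis by (simp add: subst_def)
  qed
  then show ?thesis by (simp add: fps_eq_iff)
qed

lemma subst_X: "subst fps_X V = fps_X"
proof -
  have "subst fps_X V $ m = fps_X $ m" for m
  proof (cases "m = 0")
    case True then show ?thesis by (simp add: subst_def fps_X_def ev_0)
  next
    case False
    have "(\<Sum>n\<le>m. (fps_X ^ n * ev (fps_X $ n) V) $ m) = (\<Sum>n\<in>{1}. (fps_X ^ n * ev (fps_X $ n) V) $ m)"
      using False by (intro sum.mono_neutral_right) (auto simp: ev_0 fps_X_def)
    then show ?thesis using False by (simp add: subst_def ev_1 fps_X_def)
  qed
  then show ?thesis by (simp add: fps_eq_iff)
qed

definition lift :: "real fps \<Rightarrow> real poly fps" where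
  "lift G = Abs_fps (\<lambda>n. [:G $ n:])"

lemma subst_lift: "subst (lift G) V = G"
proof -
  have "subst (lift G) V $ m = G $ m" for m
  proof -
    have "(\<Sum>n\<le>m. (fps_X ^ n * ev (lift G $ n) V) $ m) = (\<Sum>n\<in>{m}. (fps_X ^ n * ev (lift G $ n) V) $ m)"
      by (intro sum.mono_neutral_right) (auto simp: ev_const lift_def fps_X_power_mult_nth)
    then show ?thesis by (simp add: subst_def ev_const lift_def fps_X_power_mult_nth)
  qed
  then show ?thesis by (simp add: fps_eq_iff)
qed

lemma subst_mult: "subst (H1 * H2) V = subst H1 V * subst H2 V"
proof -
  have "subst (H1 * H2) V $ m = (subst H1 V * subst H2 V) $ m" for m
  proof -
    define E1 where "E1 i = ev (H1 $ i) V" for i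
    define E2 where "E2 i = ev (H2 $ i) V" for i
    define g where "g i j = (fps_X ^ (i + j) * (E1 i * E2 j)) $ m" for i j
    have "(subst H1 V * subst H2 V) $ m = (TT m H1 V * TT m H2 V) $ m"
      using agree_mult[OF agree_subst_TT[of m H1 V] agree_subst_TT[of m H2 V]]
      by (simp add: agree_def)
    also have "TT m H1 V * TT m H2 V = (\<Sum>i\<le>m. \<Sum>j\<le>m. fps_X ^ (i + j) * (E1 i * E2 j))"
      by (simp add: TT_def E1_def E2_def sum_product power_add mult_ac)
    also have "(\<Sum>i\<le>m. \<Sum>j\<le>m. fps_X ^ (i + j) * (E1 i * E2 j)) $ m = (\<Sum>i\<le>m. \<Sum>j\<le>m. g i j)"
      by (simp add: fps_sum_nth g_def)
    also have "\<dots> = (\<Sum>(i,j)\<in>{..m}\<times>{..m}. g i j)"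
      by (simp add: sum.cartesian_product)
    also have "\<dots> = (\<Sum>(i,j)\<in>{(i,j). i + j \<le> m}. g i j)"
      by (intro sum.mono_neutral_right) (auto simp: g_def fps_X_power_mult_nth split: if_splits)
    also have "\<dots> = (\<Sum>k\<le>m. \<Sum>i\<le>k. g i (k - i))"
      by (rule sum.triangle_reindex_eq)
    also have "\<dots> = TT m (H1 * H2) V $ m"
      by (simp add: TT_def g_def fps_sum_nth fps_mult_nth ev_sum ev_mult E1_def E2_def
          sum_distrib_left atLeast0AtMost)
    also have "\<dots> = subst (H1 * H2) V $ m"
      using subst_TT[of m m "H1 * H2" V] by simp
    finally show ?thesis by simp
  qed
  then show ?thesis by (simp add: fps_eq_iff)
qed

lemma subst_1: "subst 1 V = 1"
  using subst_const[of 1 V] by (simp add: ev_1)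

lemma subst_of_nat: "subst (of_nat n) V = of_nat n"
  by (induction n) (simp_all add: subst_add subst_1 subst_const[of 0, simplified] ev_0)

lemma subst_numeral: "subst (numeral k) V = numeral k"
  using subst_of_nat[of "numeral k" V] by simp

lemma subst_u: "subst (fps_const [:0,1:]) V = V"
  by (simp add: subst_const ev_u)

lemma subst_power: "subst (H ^ n) V = subst H V ^ n"
  by (induction n) (simp_all add: subst_1 subst_mult)

lemma agree_subst: assumes "agree m A B" shows "agree m (subst H A) (subst H B)"
  unfolding agree_def subst_def
proof (intro allI impI)
  fix j assume j: "j < m"
  have "(fps_X ^ n * ev (H $ n) A) $ j = (fps_X ^ n * ev (H $ n) B) $ j" for n
    using agree_ev[OF assms, of "H $ n"] j by (auto simp: fps_X_power_mult_nth agree_def)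
  then show "Abs_fps (\<lambda>m. \<Sum>n\<le>m. (fps_X ^ n * ev (H $ n) A) $ m) $ j =
      Abs_fps (\<lambda>m. \<Sum>n\<le>m. (fps_X ^ n * ev (H $ n) B) $ m) $ j" by simp
qed

definition D :: "real poly fps \<Rightarrow> real poly fps" where
  "D H = Abs_fps (\<lambda>n. pderiv (H $ n))"

lemma D_add: "D (A + B) = D A + D B"
  by (simp add: D_def fps_eq_iff pderiv_add)
lemma D_diff: "D (A - B) = D A - D B"
  by (simp add: D_def fps_eq_iff pderiv_diff)
lemma pderiv_sum': "pderiv (sum f A) = (\<Sum>x\<in>A. pderiv (f x))"
  using higher_pderiv_sum[of 1 f A] by simp
lemma D_mult: "D (A * B) = D A * B + A * D B"
proof -
  have "D (A * B) $ n = (D A * B + A * D B) $ n" for n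
  proof -
    have "D (A * B) $ n = (\<Sum>i=0..n. A $ i * pderiv (B $ (n - i)) + B $ (n - i) * pderiv (A $ i))"
      by (simp add: D_def fps_mult_nth pderiv_sum' pderiv_mult)
    also have "\<dots> = (\<Sum>i=0..n. pderiv (A $ i) * B $ (n - i)) + (\<Sum>i=0..n. A $ i * pderiv (B $ (n - i)))"
      by (simp add: sum.distrib mult.commute add.commute)
    also have "\<dots> = (D A * B + A * D B) $ n"
      by (simp add: D_def fps_mult_nth)
    finally show ?thesis .
  qed
  then show ?thesis by (simp add: fps_eq_iff)
qed
lemma D_const: "D (fps_const p) = fps_const (pderiv p)"
  by (simp add: D_def fps_eq_iff)
lemma D_X: "D fps_X = 0"
  by (simp add: D_def fps_eq_iff fps_X_def)
lemma D_lift: "D (lift G) = 0"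
  by (simp add: D_def fps_eq_iff lift_def pderiv_pCons)
lemma D_0: "D 0 = 0" by (simp add: D_def fps_eq_iff)
lemma D_1: "D 1 = 0"
  using D_const[of 1] by simp
lemma D_of_nat: "D (of_nat n) = 0"
  by (induction n) (simp_all add: D_add D_1 D_0)
lemma D_numeral: "D (numeral k) = 0"
  using D_of_nat[of "numeral k"] by simp
lemma D_u: "D (fps_const [:0,1:]) = 1"
  by (simp add: D_const pderiv_pCons)



lemma binom_sq: "binom_3_2 ^ 2 = (1 - 12 * fps_X) ^ 3"
proof -
  have "binom_3_2 ^ 2 $ n = ((3::real) gchoose n) * (-12) ^ n" for n
  proof -
    have "binom_3_2 ^ 2 $ n = (\<Sum>i=0..n. ((3/2::real) gchoose i) * ((3/2) gchoose (n - i))) * (-12) ^ n"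
      unfolding power2_eq_square fps_mult_nth sum_distrib_right
    proof (intro sum.cong refl)
      fix i assume "i \<in> {0..n}"
      then have "(-12::real) ^ n = (-12) ^ i * (-12) ^ (n - i)"
        by (simp flip: power_add)
      then show "binom_3_2 $ i * binom_3_2 $ (n - i) = ((3/2) gchoose i) * ((3/2) gchoose (n - i)) * (-12::real) ^ n"
        by (simp add: binom_3_2_def)
    qed
    also have "\<dots> = ((3/2 + 3/2::real) gchoose n) * (-12) ^ n"
      by (simp add: gbinomial_Vandermonde)
    finally show ?thesis by simp
  qed
  moreover have "((1 - 12 * fps_X) ^ 3 :: real fps) $ n = ((3::real) gchoose n) * (-12) ^ n" for n
  proof -
    have e: "(1 - 12 * fps_X) ^ 3 = (1 - 36 * fps_X + 432 * fps_X^2 - 1728 * fps_X^3 :: real fps)"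
      by (simp add: algebra_simps power2_eq_square power3_eq_cube)
    have nm: "(numeral k * f :: real fps) $ i = numeral k * f $ i" for k f i
      by (simp add: fps_numeral_fps_const)
    have g: "(3::real) gchoose n = real (3 choose n)"
      using binomial_gbinomial[of 3 n, where 'a=real] by simp
    consider "n = 0" | "n = 1" | "n = 2" | "n = 3" | "n \<ge> 4" by linarith
    then show ?thesis unfolding e g
      by cases (auto simp: nm numeral_eq_Suc fps_numeral_nth)
  qed
  ultimately show ?thesis by (simp add: fps_eq_iff)
qed

lemma binom0: "binom_3_2 $ 0 = 1" by (simp add: binom_3_2_def)

lemma kernel:
  fixes N F :: "real poly fps" and G :: "real fps"
  assumes e1: "N = fps_const [:0,1:] + N * F"
  and e2: "fps_const [:0,1:] * F = fps_const [:0,1:] * fps_X * N + F - lift G"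
  and G0: "G $ 0 = 0"
  shows "54 * fps_X * G = binom_3_2 - 1 + 18 * fps_X"
proof -
  define u :: "real poly fps" where "u = fps_const [:0,1:]"
  define L where "L = lift G"
  have e1': "N = u + N * F" using e1 by (simp add: u_def)
  have e2': "u * F = u * fps_X * N + F - L" using e2 by (simp add: u_def L_def)
  have E: "fps_X * u * N^2 - (u - 1 + L) * N + u * (u - 1) = 0"
    using e1' e2' by algebra
  define K where "K = 2 * fps_X * u * N - (u - 1 + L)"
  define \<Delta> where "\<Delta> = (u - 1 + L)^2 - 4 * fps_X * u^2 * (u - 1)"
  have K2: "K^2 = \<Delta>"
    using E unfolding K_def \<Delta>_def by algebra
  define \<Phi> where "\<Phi> V = 1 - G + 2 * fps_X * V * subst N V" for V
  have contr: "agree (Suc m) (\<Phi> A) (\<Phi> B)" if "agree m A B" for m A B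
  proof -
    have "agree m (2 * A * subst N A) (2 * B * subst N B)"
      by (intro agree_mult agree_refl that agree_subst)
    then have "agree (Suc m) (fps_X * (2 * A * subst N A)) (fps_X * (2 * B * subst N B))"
      by (rule agree_X)
    then show ?thesis unfolding \<Phi>_def
      by (metis (no_types, lifting) agree_add agree_refl mult.assoc mult.left_commute)
  qed
  obtain U where U: "\<Phi> U = U" using fixpoint_exists[of \<Phi>] contr by blast
  have U0: "U $ 0 = 1"
    using arg_cong[OF U, of "\<lambda>f. f $ 0"] G0 by (simp add: \<Phi>_def)
  have sK: "subst K U = 0"
  proof -
    have "subst K U = 2 * fps_X * U * subst N U - (U - 1 + G)"
      by (simp add: K_def u_def L_def subst_diff subst_add subst_mult subst_numeral subst_X
          subst_u subst_1 subst_lift)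
    also have "\<dots> = \<Phi> U - U" by (simp add: \<Phi>_def algebra_simps)
    finally show ?thesis using U by simp
  qed
  have sDelta: "subst \<Delta> U = 0"
    using sK K2 by (metis subst_power zero_power2)
  have DK2: "D (K^2) = 2 * K * D K"
    by (simp add: power2_eq_square D_mult algebra_simps)
  have sDDelta: "subst (D \<Delta>) U = 0"
    using DK2 K2 sK by (simp add: subst_mult subst_numeral)
  have Du: "D u = 1" by (simp add: u_def D_u)
  have DL: "D L = 0" by (simp add: L_def D_lift)
  have DDelta: "D \<Delta> = 2 * (u - 1 + L) - 4 * fps_X * (3 * u^2 - 2 * u)"
    by (simp add: \<Delta>_def power2_eq_square D_mult D_diff D_add Du DL D_1 D_X D_numeral
        algebra_simps)
  have su: "subst u U = U" by (simp add: u_def subst_u)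
  have sL: "subst L U = G" by (simp add: L_def subst_lift)
  have A: "2 * (U - 1 + G) - 4 * fps_X * (3 * U^2 - 2 * U) = 0"
    using sDDelta unfolding DDelta
    by (simp add: su sL subst_diff subst_add subst_mult subst_numeral subst_X
          subst_1 subst_power)
  have B: "(U - 1 + G)^2 - 4 * fps_X * U^2 * (U - 1) = 0"
    using sDelta unfolding \<Delta>_def
    by (simp add: su sL subst_diff subst_add subst_mult subst_numeral subst_X
          subst_1 subst_power)
  have W: "U - 1 + G = 2 * fps_X * U * (3 * U - 2)"
    using A by algebra
  have "(4 * fps_X * U^2) * (fps_X * (3 * U - 2)^2 - (U - 1)) = 0"
    using B W by algebra
  moreover have "4 * fps_X * U^2 \<noteq> (0 :: real fps)"
  proof
    assume "4 * fps_X * U^2 = 0"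
    then have "(fps_X * (4 * U^2)) $ 1 = 0" by (simp add: mult_ac)
    then show False using U0 by (simp add: power2_eq_square)
  qed
  ultimately have R: "fps_X * (3 * U - 2)^2 = U - 1" by simp
  have Gd: "G = 1 - U + 2 * fps_X * U * (3 * U - 2)" using W by algebra
  define S where "S = fps_X * (3 * U - 2)"
  have XS: "fps_X = S - 3 * S^2" using R unfolding S_def by algebra
  define B' where "B' = 54 * fps_X * G + 1 - 18 * fps_X"
  have "(1 - 3 * S) * B' = (1 - 3 * S) * (1 - 6 * S)^3"
    using R Gd unfolding B'_def S_def by algebra
  moreover have "1 - 3 * S \<noteq> 0"
  proof
    assume "1 - 3 * S = 0"
    then have "(1 - 3 * S) $ 0 = 0" by simp
    then show False by (simp add: S_def)
  qed
  ultimately have B'S: "B' = (1 - 6 * S)^3" by simp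
  have B'sq: "B'^2 = binom_3_2^2"
    unfolding binom_sq B'S XS by algebra
  have "(B' - binom_3_2) * (B' + binom_3_2) = 0"
    using B'sq by algebra
  moreover have "B' + binom_3_2 \<noteq> 0"
  proof
    assume "B' + binom_3_2 = 0"
    then have "(B' + binom_3_2) $ 0 = 0" by simp
    then show False using G0 by (simp add: B'_def binom0)
  qed
  ultimately have "B' = binom_3_2" by simp
  then show ?thesis unfolding B'_def by (simp add: algebra_simps)
qed



fun skel_of :: "deriv \<Rightarrow> skel" where
  "skel_of RV = Hole"
| "skel_of (RA a b) = App (skel_of a) (skel_of b)"
| "skel_of (RS d) = skel_of d"
| "skel_of (RL d) = Lam (skel_of d)"

fun isneu :: "deriv \<Rightarrow> nat \<Rightarrow> bool" and isnf :: "deriv \<Rightarrow> nat \<Rightarrow> bool" where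
  "isneu RV k = (k = 1)"
| "isneu (RA a b) k = (\<exists>j\<le>k. isneu a j \<and> isnf b (k - j))"
| "isneu (RS d) k = False"
| "isneu (RL d) k = False"
| "isnf RV k = False"
| "isnf (RA a b) k = False"
| "isnf (RS d) k = isneu d k"
| "isnf (RL d) k = isnf d (Suc k)"

lemma der_imp:
  "der_neu d p k \<Longrightarrow> isneu d k \<and> p = skel_of d"
  "der_nf d p k \<Longrightarrow> isnf d k \<and> p = skel_of d"
  by (induction rule: der_neu_der_nf.inducts) (auto, metis add_diff_cancel_left' le_add1)

lemma imp_der: "(\<forall>k. isneu d k \<longrightarrow> der_neu d (skel_of d) k) \<and> (\<forall>k. isnf d k \<longrightarrow> der_nf d (skel_of d) k)"
proof (induction d)
  case RV then show ?case using rule_v by simp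
next
  case (RA a b)
  have "der_neu (RA a b) (skel_of (RA a b)) k" if "isneu (RA a b) k" for k
  proof -
    from that obtain j where "j \<le> k" "isneu a j" "isnf b (k - j)" by auto
    then have "der_neu (RA a b) (App (skel_of a) (skel_of b)) (j + (k - j))"
      using RA by (intro der_neu_der_nf.intros) auto
    with \<open>j \<le> k\<close> show ?thesis by simp
  qed
  then show ?case by auto
next
  case (RS d) then show ?case by (auto intro: der_neu_der_nf.intros)
next
  case (RL d) then show ?case by (auto intro: der_neu_der_nf.intros)
qed

lemma der_slam:
  "der_neu d p k \<Longrightarrow> slam p k"
  "der_nf d p k \<Longrightarrow> slam p k"
  by (induction rule: der_neu_der_nf.inducts) (auto intro: slam.intros slam_hole[simplified])

lemma size_bound: "(isneu d k \<longrightarrow> size d + k \<le> 3 * dsize d + 1) \<and> (isnf d k \<longrightarrow> size d + k + 1 \<le> 3 * dsize d)"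
proof (induction d arbitrary: k)
  case (RA a b)
  show ?case
  proof (intro conjI impI)
    assume "isneu (RA a b) k"
    then obtain j where "j \<le> k" "isneu a j" "isnf b (k - j)" by auto
    with RA.IH[of j] RA.IH[of "k - j"] show "size (RA a b) + k \<le> 3 * dsize (RA a b) + 1" by auto
  qed auto
next
  case (RL d)
  then show ?case using RL.IH[of "Suc k"] by auto
next
  case (RS d)
  then show ?case using RS.IH[of k] by auto
qed auto

lemma deg_unique: "(isneu d j \<longrightarrow> isneu d j' \<longrightarrow> j = j') \<and> (isnf d j \<longrightarrow> isnf d j' \<longrightarrow> j = j')"
proof (induction d arbitrary: j j')
  case (RA a b)
  show ?case
  proof (intro conjI impI)
    assume "isneu (RA a b) j" "isneu (RA a b) j'"
    then obtain i i' where "i \<le> j" "isneu a i" "isnf b (j - i)" "i' \<le> j'" "isneu a i'" "isnf b (j' - i')"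
      by auto
    with RA.IH show "j = j'" by (metis le_add_diff_inverse)
  qed auto
qed auto

lemma finite_size: "finite {d::deriv. size d \<le> m}"
proof (induction m)
  case 0
  have "{d::deriv. size d \<le> 0} \<subseteq> {RV}"
  proof
    fix d :: deriv assume "d \<in> {d. size d \<le> 0}" then show "d \<in> {RV}" by (cases d) auto
  qed
  then show ?case by (rule finite_subset) simp
next
  case (Suc m)
  let ?S = "{d::deriv. size d \<le> m}"
  have "{d::deriv. size d \<le> Suc m} \<subseteq> {RV} \<union> (\<lambda>(a,b). RA a b) ` (?S \<times> ?S) \<union> RS ` ?S \<union> RL ` ?S"
  proof
    fix d :: deriv assume "d \<in> {d. size d \<le> Suc m}"
    then show "d \<in> {RV} \<union> (\<lambda>(a,b). RA a b) ` (?S \<times> ?S) \<union> RS ` ?S \<union> RL ` ?S"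
      by (cases d) auto
  qed
  then show ?case by (rule finite_subset) (use Suc in auto)
qed

definition NEs :: "nat \<Rightarrow> nat \<Rightarrow> deriv set" where
  "NEs n k = {d. isneu d k \<and> dsize d = n}"
definition NFs :: "nat \<Rightarrow> nat \<Rightarrow> deriv set" where
  "NFs n k = {d. isnf d k \<and> dsize d = n}"

lemma finite_NEs: "finite (NEs n k)"
  by (rule finite_subset[OF _ finite_size[of "3 * n + 1"]]) (use size_bound in \<open>fastforce simp: NEs_def\<close>)
lemma finite_NFs: "finite (NFs n k)"
  by (rule finite_subset[OF _ finite_size[of "3 * n"]]) (use size_bound in \<open>fastforce simp: NFs_def\<close>)

lemma NEs_empty: "k > 3 * n + 1 \<Longrightarrow> NEs n k = {}"
  using size_bound by (fastforce simp: NEs_def)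
lemma NFs_empty: "k > 3 * n + 1 \<Longrightarrow> NFs n k = {}"
  using size_bound by (fastforce simp: NFs_def)
lemma NFs_0: "NFs 0 k = {}"
  using size_bound by (fastforce simp: NFs_def)

definition fc :: "nat \<Rightarrow> nat \<Rightarrow> nat" where "fc n k = card (NFs n k)"
definition gc :: "nat \<Rightarrow> nat \<Rightarrow> nat" where "gc n k = card (NEs n k)"

lemma fc_rec: "fc n k = (if n = 0 then 0 else gc (n - 1) k) + fc n (Suc k)"
proof -
  define A where "A = {d. isneu d k \<and> Suc (dsize d) = n}"
  have eq: "NFs n k = RS ` A \<union> RL ` NFs n (Suc k)"
  proof (intro set_eqI iffI)
    fix d assume "d \<in> NFs n k"
    then show "d \<in> RS ` A \<union> RL ` NFs n (Suc k)"
      by (cases d) (auto simp: NFs_def A_def)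
  qed (auto simp: NFs_def A_def)
  have cA: "card A = (if n = 0 then 0 else gc (n - 1) k)"
  proof (cases n)
    case 0 then show ?thesis by (simp add: A_def)
  next
    case (Suc m)
    then have "A = NEs m k" by (auto simp: A_def NEs_def)
    then show ?thesis using Suc by (simp add: gc_def)
  qed
  have fA: "finite A"
  proof (cases n)
    case 0 then show ?thesis by (simp add: A_def)
  next
    case (Suc m)
    then have "A = NEs m k" by (auto simp: A_def NEs_def)
    then show ?thesis by (simp add: finite_NEs)
  qed
  have "card (NFs n k) = card (RS ` A) + card (RL ` NFs n (Suc k))"
    unfolding eq by (rule card_Un_disjoint) (use fA finite_NFs in auto)
  also have "\<dots> = card A + card (NFs n (Suc k))"
    by (simp add: card_image inj_on_def)
  finally show ?thesis by (simp add: fc_def cA)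
qed

lemma gc_rec: "gc n k = (if n = 0 \<and> k = 1 then 1 else 0) + (\<Sum>i\<le>n. \<Sum>j\<le>k. gc i j * fc (n - i) (k - j))"
proof -
  define I where "I = {..n} \<times> {..k}"
  define B where "B = (\<lambda>(i,j). (\<lambda>(a,b). RA a b) ` (NEs i j \<times> NFs (n - i) (k - j)))"
  define R where "R = (if n = 0 \<and> k = 1 then {RV} else {})"
  have eq: "NEs n k = R \<union> (\<Union>x\<in>I. B x)"
  proof (intro set_eqI iffI)
    fix d assume d: "d \<in> NEs n k"
    show "d \<in> R \<union> (\<Union>x\<in>I. B x)"
    proof (cases d)
      case (RA a b)
      with d obtain j where "j \<le> k" "isneu a j" "isnf b (k - j)" "dsize a + dsize b = n"
        by (auto simp: NEs_def)
      then have "(dsize a, j) \<in> I" "d \<in> B (dsize a, j)"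
        using RA by (auto simp: I_def B_def NEs_def NFs_def)
      then show ?thesis by blast
    qed (use d in \<open>auto simp: NEs_def R_def\<close>)
  next
    fix d assume "d \<in> R \<union> (\<Union>x\<in>I. B x)"
    then show "d \<in> NEs n k"
      by (auto simp: R_def I_def B_def NEs_def NFs_def split: if_splits)
  qed
  have fB: "finite (B x)" for x
    by (auto simp: B_def finite_NEs finite_NFs split: prod.splits)
  have disj: "B x \<inter> B y = {}" if "x \<in> I" "y \<in> I" "x \<noteq> y" for x y
  proof -
    obtain i j i' j' where xy: "x = (i,j)" "y = (i',j')" by (cases x, cases y)
    show ?thesis
    proof (rule ccontr)
      assume "B x \<inter> B y \<noteq> {}"
      then obtain a b where "a \<in> NEs i j" "a \<in> NEs i' j'" by (auto simp: B_def xy)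
      then have "i = i'" "j = j'" using deg_unique by (auto simp: NEs_def)
      then show False using that xy by simp
    qed
  qed
  have RB: "R \<inter> (\<Union>x\<in>I. B x) = {}" by (auto simp: R_def B_def)
  have "card (NEs n k) = card R + card (\<Union>x\<in>I. B x)"
    unfolding eq by (rule card_Un_disjoint) (use RB fB in \<open>auto simp: R_def I_def\<close>)
  also have "card (\<Union>x\<in>I. B x) = (\<Sum>x\<in>I. card (B x))"
    by (rule card_UN_disjoint) (use fB disj in \<open>auto simp: I_def\<close>)
  also have "\<dots> = (\<Sum>(i,j)\<in>I. gc i j * fc (n - i) (k - j))"
  proof (intro sum.cong refl)
    fix x assume "x \<in> I"
    obtain i j where x: "x = (i,j)" by (cases x)
    have "card (B x) = card (NEs i j \<times> NFs (n - i) (k - j))"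
      unfolding B_def x by (simp add: card_image inj_on_def)
    then show "card (B x) = (case x of (i, j) \<Rightarrow> gc i j * fc (n - i) (k - j))"
      by (simp add: x gc_def fc_def card_cartesian_product)
  qed
  also have "\<dots> = (\<Sum>i\<le>n. \<Sum>j\<le>k. gc i j * fc (n - i) (k - j))"
    by (simp add: I_def sum.cartesian_product)
  finally show ?thesis by (simp add: gc_def R_def)
qed

lemma gc_zero: "k > 3 * n + 1 \<Longrightarrow> gc n k = 0" by (simp add: gc_def NEs_empty)
lemma fc_zero: "k > 3 * n + 1 \<Longrightarrow> fc n k = 0" by (simp add: fc_def NFs_empty)
lemma fc_0: "fc 0 k = 0" by (simp add: fc_def NFs_0)

lemma r_count_fc: "r_count n = fc n 0"
proof -
  have "{(p, d). slam p 0 \<and> der_nf d p 0 \<and> dsize d = n} = (\<lambda>d. (skel_of d, d)) ` NFs n 0"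
    using der_imp(2) imp_der der_slam(2) by (auto simp: NFs_def) blast+
  then show ?thesis by (simp add: r_count_def fc_def card_image inj_on_def)
qed



definition mkp :: "(nat \<Rightarrow> nat) \<Rightarrow> nat \<Rightarrow> real poly" where
  "mkp c B = (\<Sum>k\<le>B. monom (real (c k)) k)"

lemma coeff_mkp: "coeff (mkp c B) i = (if i \<le> B then real (c i) else 0)"
  by (simp add: mkp_def coeff_sum)

definition Pp where "Pp n = mkp (fc n) (3 * n + 1)"
definition Qp where "Qp n = mkp (gc n) (3 * n + 1)"

lemma coeff_Pp: "coeff (Pp n) k = real (fc n k)"
  using fc_zero[of n k] by (simp add: Pp_def coeff_mkp)
lemma coeff_Qp: "coeff (Qp n) k = real (gc n k)"
  using gc_zero[of n k] by (simp add: Qp_def coeff_mkp)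

definition FF :: "real poly fps" where "FF = Abs_fps Pp"
definition NN :: "real poly fps" where "NN = Abs_fps Qp"
definition GG :: "real fps" where "GG = Abs_fps (\<lambda>n. real (fc n 0))"

lemma e1: "NN = fps_const [:0,1:] + NN * FF"
proof -
  have "coeff (NN $ n) k = coeff ((fps_const [:0,1:] + NN * FF) $ n) k" for n k
  proof -
    have "coeff ((NN * FF) $ n) k = (\<Sum>i\<le>n. \<Sum>j\<le>k. real (gc i j * fc (n - i) (k - j)))"
      by (simp add: NN_def FF_def fps_mult_nth coeff_sum coeff_mult coeff_Pp coeff_Qp atLeast0AtMost)
    moreover have "coeff (fps_const [:0,1:] $ n) k = (if n = 0 \<and> k = 1 then 1 else 0)"
      by (auto simp: coeff_pCons split: nat.splits)
    ultimately show ?thesis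
      using arg_cong[OF gc_rec[of n k], of real]
      by (simp add: NN_def coeff_Qp coeff_pCons split: nat.splits)
  qed
  then show ?thesis by (simp add: fps_eq_iff poly_eq_iff)
qed

lemma e2: "fps_const [:0,1:] * FF = fps_const [:0,1:] * fps_X * NN + FF - lift GG"
proof -
  have "coeff ((fps_const [:0,1:] * FF) $ n) k = coeff ((fps_const [:0,1:] * (fps_X * NN) + FF - lift GG) $ n) k" for n k
  proof (cases k)
    case 0 then show ?thesis
      by (simp add: FF_def NN_def lift_def GG_def coeff_Pp)
  next
    case (Suc k')
    have "[:0, 1:] * p = pCons 0 p" for p :: "real poly" by simp
    then show ?thesis using Suc fc_rec[of n k']
      by (cases n) (auto simp: FF_def NN_def lift_def GG_def coeff_Pp coeff_Qp)
  qed
  then show ?thesis by (simp add: fps_eq_iff poly_eq_iff mult.assoc)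
qed

lemma GG0: "GG $ 0 = 0" by (simp add: GG_def fc_0)

theorem proposition2p9:
  shows "Abs_fps (\<lambda>n. real (r_count n))
           = - (1 - 18 * fps_X - binom_3_2) / (54 * fps_X)"
proof -
  have k: "54 * fps_X * GG = binom_3_2 - 1 + 18 * fps_X"
    by (rule kernel[OF e1 e2 GG0])
  have "- (1 - 18 * fps_X - binom_3_2) = (54 * fps_X) * GG"
    using k by (simp add: algebra_simps)
  moreover have "(54 * fps_X :: real fps) \<noteq> 0"
  proof
    assume "(54 * fps_X :: real fps) = 0"
    then have "(54 * fps_X :: real fps) $ 1 = 0" by simp
    then show False by (simp add: fps_numeral_nth)
  qed
  ultimately have "- (1 - 18 * fps_X - binom_3_2) / (54 * fps_X) = GG"
    by simp
  moreover have "Abs_fps (\<lambda>n. real (r_count n)) = GG"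
    by (simp add: GG_def r_count_fc)
  ultimately show ?thesis by simp
qed



end
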